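(* Fix $m\in\mathbb{R}$ and $[\ell',r']\subset(\ell,r)$. Let $(h_i)_{i\geq1}$ be continuous concave functions on $[\ell,r]$ converging uniformly on $[\ell,r]$ to a continuous concave function $h_0$. Then $\liminf_{i\to\infty}\mathbf{l}(h_i)\geq\mathbf{l}(h_0)$ and $\limsup_{i\to\infty}\mathbf{r}(h_i)\leq\mathbf{r}(h_0)$.
   Context: For a continuous concave $h$ on $[\ell,r]$ with one-sided derivatives $h'_\pm(x)=\lim_{y\to x^\pm}\frac{h(y)-h(x)}{y-x}$: $\mathbf{l}(h)=\inf\{x\in[\ell',r']: h'_+(x)\leq m\}$ if this set is non-empty and $\mathbf{l}(h)=r'$ otherwise; $\mathbf{r}(h)=\sup\{x\in[\ell',r']: h'_-(x)\geq m\}$ if this set is non-empty and $\mathbf{r}(h)=\ell'$ otherwise. *)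

theory Defs
  imports "HOL-Analysis.Analysis"
begin

definition rderiv :: "(real \<Rightarrow> real) \<Rightarrow> real \<Rightarrow> real" where
  "rderiv h x = Lim (at_right x) (\<lambda>y. (h y - h x) / (y - x))"

definition lderiv :: "(real \<Rightarrow> real) \<Rightarrow> real \<Rightarrow> real" where
  "lderiv h x = Lim (at_left x) (\<lambda>y. (h y - h x) / (y - x))"

definition lpt :: "real \<Rightarrow> real \<Rightarrow> real \<Rightarrow> (real \<Rightarrow> real) \<Rightarrow> real" where
  "lpt m l' r' h = (if {x \<in> {l'..r'}. rderiv h x \<le> m} \<noteq> {}
                     then Inf {x \<in> {l'..r'}. rderiv h x \<le> m} else r')"

definition rpt :: "real \<Rightarrow> real \<Rightarrow> real \<Rightarrow> (real \<Rightarrow> real) \<Rightarrow> real" where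
  "rpt m l' r' h = (if {x \<in> {l'..r'}. lderiv h x \<ge> m} \<noteq> {}
                     then Sup {x \<in> {l'..r'}. lderiv h x \<ge> m} else l')"

end

theory Submission
  imports Defs
begin

lemma slope3:
  fixes f :: "real \<Rightarrow> real"
  assumes f: "concave_on I f" and I: "x \<in> I" "z \<in> I" and t: "x < y" "y < z"
  shows "(f z - f x) / (z - x) \<le> (f y - f x) / (y - x)"
    and "(f z - f y) / (z - y) \<le> (f z - f x) / (z - x)"
proof -
  have c: "convex_on I (\<lambda>x. - f x)" using f by (simp add: concave_on_def)
  note a = convex_on_slope_le[OF c I t]
  have e1: "(- f x - - f y) / (x - y) = - ((f y - f x) / (y - x))"
    using t by (auto simp: field_simps)
  have e2: "(- f x - - f z) / (x - z) = - ((f z - f x) / (z - x))"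
    using t by (auto simp: field_simps)
  have e3: "(- f y - - f z) / (y - z) = - ((f z - f y) / (z - y))"
    using t by (auto simp: field_simps)
  show "(f z - f x) / (z - x) \<le> (f y - f x) / (y - x)" using a(1) e1 e2 by simp
  show "(f z - f y) / (z - y) \<le> (f z - f x) / (z - x)" using a(2) e2 e3 by simp
qed

lemma slope_mono:
  fixes f :: "real \<Rightarrow> real"
  assumes f: "concave_on {l..r} f" and "l \<le> a" "a < b" "c < d" "a \<le> c" "b \<le> d" "d \<le> r"
  shows "(f d - f c) / (d - c) \<le> (f b - f a) / (b - a)"
proof -
  have 1: "(f d - f a) / (d - a) \<le> (f b - f a) / (b - a)"
  proof (cases "b < d")
    case True then show ?thesis using slope3(1)[OF f, of a d b] assms by auto
  qed (use assms in auto)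
  have 2: "(f d - f c) / (d - c) \<le> (f d - f a) / (d - a)"
  proof (cases "a < c")
    case True then show ?thesis using slope3(2)[OF f, of a d c] assms by auto
  qed (use assms in auto)
  show ?thesis using 1 2 by linarith
qed

lemma rderiv_props:
  fixes f :: "real \<Rightarrow> real"
  assumes f: "concave_on {l..r} f" and x: "l < x" "x < r"
  shows "\<And>y. y \<in> {x<..r} \<Longrightarrow> (f y - f x) / (y - x) \<le> rderiv f x"
    and "\<And>e. e > 0 \<Longrightarrow> \<exists>y\<in>{x<..r}. (f y - f x) / (y - x) > rderiv f x - e"
proof -
  define g where "g = (\<lambda>y. - ((f y - f x) / (y - x)))"
  have lim: "(g \<longlongrightarrow> Inf (g ` ({x<..} \<inter> {x..r}))) (at x within ({x<..} \<inter> {x..r}))"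
  proof (rule Lim_right_bound[where K = "- ((f x - f l) / (x - l))"])
    fix a b assume "a \<in> {x..r}" "b \<in> {x..r}" "x < a" "a \<le> b"
    then show "g a \<le> g b" unfolding g_def
      using slope_mono[OF f, of x a x b] x by auto
  next
    fix a assume "a \<in> {x..r}" "x < a"
    then show "- ((f x - f l) / (x - l)) \<le> g a" unfolding g_def
      using slope_mono[OF f, of l x x a] x by auto
  qed
  have "at x within ({x<..} \<inter> {x..r}) = at_right x"
  proof -
    have "at x within ({x<..} \<inter> {x..r}) = at x within {x..r}"
      unfolding at_within_def by (rule arg_cong[where f="\<lambda>S. inf (nhds x) (principal S)"]) auto
    then show ?thesis using at_within_Icc_at_right[OF x(2)] by simp
  qed
  with lim have lim2: "((\<lambda>y. (f y - f x) / (y - x)) \<longlongrightarrow> - Inf (g ` ({x<..} \<inter> {x..r}))) (at_right x)"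
    unfolding g_def by (auto dest: tendsto_minus)
  hence rd: "rderiv f x = - Inf (g ` ({x<..} \<inter> {x..r}))"
    unfolding rderiv_def by (intro tendsto_Lim) auto
  note lim3 = lim2[folded rd]
  show "(f y - f x) / (y - x) \<le> rderiv f x" if y: "y \<in> {x<..r}" for y
  proof (rule tendsto_lowerbound[OF lim3])
    show "\<forall>\<^sub>F z in at_right x. (f y - f x) / (y - x) \<le> (f z - f x) / (z - x)"
      using y x by (subst eventually_at_right[of x y]) (auto intro!: exI[of _ y] slope_mono[OF f])
  qed simp
  show "\<exists>y\<in>{x<..r}. (f y - f x) / (y - x) > rderiv f x - e" if e: "e > 0" for e
  proof -
    have "\<forall>\<^sub>F y in at_right x. dist ((f y - f x) / (y - x)) (rderiv f x) < e"
      using lim3 e by (rule tendstoD)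
    moreover have "\<forall>\<^sub>F y in at_right x. y \<in> {x<..r}"
      unfolding eventually_at_right[of x r, OF x(2)] by (auto intro!: exI[of _ r] x)
    ultimately have "\<forall>\<^sub>F y in at_right x. y \<in> {x<..r} \<and> (f y - f x) / (y - x) > rderiv f x - e"
      by eventually_elim (auto simp: dist_real_def)
    from eventually_happens[OF this] show ?thesis by auto
  qed
qed


lemma slope_swap: "((p::real) - q) / (a - b) = (q - p) / (b - a)"
  by (metis minus_diff_eq minus_divide_divide)

lemma lderiv_props:
  fixes f :: "real \<Rightarrow> real"
  assumes f: "concave_on {l..r} f" and x: "l < x" "x < r"
  shows "\<And>w. w \<in> {l..<x} \<Longrightarrow> lderiv f x \<le> (f x - f w) / (x - w)"
    and "\<And>e. e > 0 \<Longrightarrow> \<exists>w\<in>{l..<x}. (f x - f w) / (x - w) < lderiv f x + e"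
proof -
  define g where "g = (\<lambda>y. - ((f x - f y) / (x - y)))"
  have lim: "(g \<longlongrightarrow> Sup (g ` ({..<x} \<inter> {l..x}))) (at x within ({..<x} \<inter> {l..x}))"
  proof (rule Lim_left_bound[where K = "- ((f r - f x) / (r - x))"])
    fix a b assume "a \<in> {l..x}" "b \<in> {l..x}" "b < x" "a \<le> b"
    then show "g a \<le> g b" unfolding g_def
      using slope_mono[OF f, of a x b x] x by auto
  next
    fix a assume "a \<in> {l..x}" "a < x"
    then show "g a \<le> - ((f r - f x) / (r - x))" unfolding g_def
      using slope_mono[OF f, of a x x r] x by auto
  qed
  have "at x within ({..<x} \<inter> {l..x}) = at_left x"
  proof -
    have "at x within ({..<x} \<inter> {l..x}) = at x within {l..x}"
      unfolding at_within_def by (rule arg_cong[where f="\<lambda>S. inf (nhds x) (principal S)"]) auto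
    then show ?thesis using at_within_Icc_at_left[OF x(1)] by simp
  qed
  with lim have lim2: "((\<lambda>y. (f x - f y) / (x - y)) \<longlongrightarrow> - Sup (g ` ({..<x} \<inter> {l..x}))) (at_left x)"
    unfolding g_def by (auto dest: tendsto_minus)
  hence lim2': "((\<lambda>y. (f y - f x) / (y - x)) \<longlongrightarrow> - Sup (g ` ({..<x} \<inter> {l..x}))) (at_left x)"
    by (simp add: slope_swap)
  hence rd: "lderiv f x = - Sup (g ` ({..<x} \<inter> {l..x}))"
    unfolding lderiv_def by (intro tendsto_Lim) auto
  note lim3 = lim2[folded rd]
  show "lderiv f x \<le> (f x - f w) / (x - w)" if w: "w \<in> {l..<x}" for w
  proof (rule tendsto_upperbound[OF lim3])
    show "\<forall>\<^sub>F z in at_left x. (f x - f z) / (x - z) \<le> (f x - f w) / (x - w)"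
      using w x by (subst eventually_at_left[of w x]) (auto intro!: exI[of _ w] slope_mono[OF f])
  qed simp
  show "\<exists>w\<in>{l..<x}. (f x - f w) / (x - w) < lderiv f x + e" if e: "e > 0" for e
  proof -
    have "\<forall>\<^sub>F y in at_left x. dist ((f x - f y) / (x - y)) (lderiv f x) < e"
      using lim3 e by (rule tendstoD)
    moreover have "\<forall>\<^sub>F y in at_left x. y \<in> {l..<x}"
      unfolding eventually_at_left[of l x, OF x(1)] by (auto intro!: exI[of _ l] x)
    ultimately have "\<forall>\<^sub>F y in at_left x. y \<in> {l..<x} \<and> (f x - f y) / (x - y) < lderiv f x + e"
      by eventually_elim (auto simp: dist_real_def)
    from eventually_happens[OF this] show ?thesis by auto
  qed
qed


lemma lpt_bounds:
  assumes "l' \<le> r'"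
  shows "l' \<le> lpt m l' r' h" "lpt m l' r' h \<le> r'"
proof -
  let ?S = "{x \<in> {l'..r'}. rderiv h x \<le> m}"
  have "l' \<le> lpt m l' r' h \<and> lpt m l' r' h \<le> r'"
  proof (cases "?S = {}")
    case False
    then obtain z where z: "z \<in> ?S" by auto
    have bdd: "bdd_below ?S" by (rule bdd_belowI[of _ l']) auto
    have "l' \<le> Inf ?S" using False by (intro cInf_greatest) auto
    moreover have "Inf ?S \<le> z" using z bdd by (intro cInf_lower)
    ultimately show ?thesis using False z unfolding lpt_def by auto
  qed (use assms in \<open>auto simp: lpt_def\<close>)
  then show "l' \<le> lpt m l' r' h" "lpt m l' r' h \<le> r'" by auto
qed

lemma rpt_bounds:
  assumes "l' \<le> r'"
  shows "l' \<le> rpt m l' r' h" "rpt m l' r' h \<le> r'"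
proof -
  let ?S = "{x \<in> {l'..r'}. lderiv h x \<ge> m}"
  have "l' \<le> rpt m l' r' h \<and> rpt m l' r' h \<le> r'"
  proof (cases "?S = {}")
    case False
    then obtain z where z: "z \<in> ?S" by auto
    have bdd: "bdd_above ?S" by (rule bdd_aboveI[of _ r']) auto
    have "Sup ?S \<le> r'" using False by (intro cSup_least) auto
    moreover have "z \<le> Sup ?S" using z bdd by (intro cSup_upper)
    ultimately show ?thesis using False z unfolding rpt_def by auto
  qed (use assms in \<open>auto simp: rpt_def\<close>)
  then show "l' \<le> rpt m l' r' h" "rpt m l' r' h \<le> r'" by auto
qed

lemma lpt_key:
  fixes h :: "nat \<Rightarrow> real \<Rightarrow> real" and h0 :: "real \<Rightarrow> real"
  assumes "l < l'" "l' \<le> r'" "r' < r"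
    and conc: "\<And>i. concave_on {l..r} (h i)" and conc0: "concave_on {l..r} h0"
    and u: "uniform_limit {l..r} h h0 sequentially"
    and x: "l' \<le> x" "x < lpt m l' r' h0"
  shows "\<forall>\<^sub>F i in sequentially. x \<le> lpt m l' r' (h i)"
proof -
  have xr: "x < r'" using x lpt_bounds[OF assms(2), of m h0] by linarith
  have "\<not> rderiv h0 x \<le> m"
  proof
    assume "rderiv h0 x \<le> m"
    hence mem: "x \<in> {x \<in> {l'..r'}. rderiv h0 x \<le> m}" using x xr by auto
    have "bdd_below {x \<in> {l'..r'}. rderiv h0 x \<le> m}" by (rule bdd_belowI[of _ l']) auto
    with mem have "lpt m l' r' h0 \<le> x" unfolding lpt_def by (auto intro: cInf_lower)
    with x show False by simp
  qed
  hence gt: "rderiv h0 x - m > 0" by simp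
  have "l < x" "x < r" using x xr assms by auto
  from rderiv_props(2)[OF conc0 this gt] obtain y where
    y: "y \<in> {x<..r}" "(h0 y - h0 x) / (y - x) > m" by auto
  have "((\<lambda>i. (h i y - h i x) / (y - x)) \<longlongrightarrow> (h0 y - h0 x) / (y - x)) sequentially"
    using y x xr assms
    by (intro tendsto_intros tendsto_uniform_limitI[OF u]) auto
  hence ev: "\<forall>\<^sub>F i in sequentially. (h i y - h i x) / (y - x) > m"
    using y(2) by (rule order_tendstoD)
  show ?thesis using ev
  proof eventually_elim
    case (elim i)
    have "\<forall>z \<in> {l'..x}. m < rderiv (h i) z"
    proof
      fix z assume z: "z \<in> {l'..x}"
      have "(h i y - h i x) / (y - x) \<le> (h i y - h i z) / (y - z)"
        using z y assms by (intro slope_mono[OF conc[of i]]) auto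
      also have "\<dots> \<le> rderiv (h i) z"
        using z y assms xr by (intro rderiv_props(1)[OF conc[of i]]) auto
      finally show "m < rderiv (h i) z" using elim by simp
    qed
    hence sub: "\<forall>z \<in> {z \<in> {l'..r'}. rderiv (h i) z \<le> m}. x \<le> z"
      by (metis (no_types, lifting) atLeastAtMost_iff linorder_not_le mem_Collect_eq nle_le)
    show ?case unfolding lpt_def using sub xr by (auto intro!: cInf_greatest)
  qed
qed

lemma rpt_key:
  fixes h :: "nat \<Rightarrow> real \<Rightarrow> real" and h0 :: "real \<Rightarrow> real"
  assumes "l < l'" "l' \<le> r'" "r' < r"
    and conc: "\<And>i. concave_on {l..r} (h i)" and conc0: "concave_on {l..r} h0"
    and u: "uniform_limit {l..r} h h0 sequentially"
    and x: "x \<le> r'" "rpt m l' r' h0 < x"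
  shows "\<forall>\<^sub>F i in sequentially. rpt m l' r' (h i) \<le> x"
proof -
  have xl: "l' < x" using x rpt_bounds[OF assms(2), of m h0] by linarith
  have "\<not> lderiv h0 x \<ge> m"
  proof
    assume "lderiv h0 x \<ge> m"
    hence mem: "x \<in> {x \<in> {l'..r'}. lderiv h0 x \<ge> m}" using x xl by auto
    have "bdd_above {x \<in> {l'..r'}. lderiv h0 x \<ge> m}" by (rule bdd_aboveI[of _ r']) auto
    with mem have "x \<le> rpt m l' r' h0" unfolding rpt_def by (auto intro: cSup_upper)
    with x show False by simp
  qed
  hence gt: "m - lderiv h0 x > 0" by simp
  have "l < x" "x < r" using x xl assms by auto
  from lderiv_props(2)[OF conc0 this gt] obtain w where
    w: "w \<in> {l..<x}" "(h0 x - h0 w) / (x - w) < m" by auto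
  have "((\<lambda>i. (h i x - h i w) / (x - w)) \<longlongrightarrow> (h0 x - h0 w) / (x - w)) sequentially"
    using w x xl assms
    by (intro tendsto_intros tendsto_uniform_limitI[OF u]) auto
  hence ev: "\<forall>\<^sub>F i in sequentially. (h i x - h i w) / (x - w) < m"
    using w(2) by (rule order_tendstoD)
  show ?thesis using ev
  proof eventually_elim
    case (elim i)
    have "\<forall>z \<in> {x..r'}. lderiv (h i) z < m"
    proof
      fix z assume z: "z \<in> {x..r'}"
      have "lderiv (h i) z \<le> (h i z - h i w) / (z - w)"
        using z w assms xl by (intro lderiv_props(1)[OF conc[of i]]) auto
      also have "\<dots> \<le> (h i x - h i w) / (x - w)"
        using z w assms by (intro slope_mono[OF conc[of i]]) auto
      finally show "lderiv (h i) z < m" using elim by simp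
    qed
    hence sub: "\<forall>z \<in> {z \<in> {l'..r'}. lderiv (h i) z \<ge> m}. z \<le> x"
      by (metis (no_types, lifting) atLeastAtMost_iff linorder_not_le mem_Collect_eq nle_le)
    show ?case unfolding rpt_def using sub xl by (auto intro!: cSup_least)
  qed
qed


theorem mainTheorem19:
  fixes m l r l' r' :: real
    and h :: "nat \<Rightarrow> real \<Rightarrow> real" and h0 :: "real \<Rightarrow> real"
  assumes "l < l'" and "l' \<le> r'" and "r' < r"
    and "\<And>i. continuous_on {l..r} (h i)"
    and "\<And>i. concave_on {l..r} (h i)"
    and "continuous_on {l..r} h0" and "concave_on {l..r} h0"
    and "uniform_limit {l..r} h h0 sequentially"
  shows "liminf (\<lambda>i. ereal (lpt m l' r' (h i))) \<ge> ereal (lpt m l' r' h0) \<and>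
         limsup (\<lambda>i. ereal (rpt m l' r' (h i))) \<le> ereal (rpt m l' r' h0)"
proof
  show "liminf (\<lambda>i. ereal (lpt m l' r' (h i))) \<ge> ereal (lpt m l' r' h0)"
  proof (subst le_Liminf_iff, intro allI impI)
    fix y :: ereal assume y: "y < ereal (lpt m l' r' h0)"
    show "\<forall>\<^sub>F i in sequentially. y < ereal (lpt m l' r' (h i))"
    proof (cases "y < ereal l'")
      case True
      then show ?thesis using lpt_bounds(1)[OF assms(2)]
        by (intro always_eventually allI) (meson ereal_less_eq(3) less_le_trans)
    next
      case False
      then obtain y' where y': "y = ereal y'" "l' \<le> y'" using y
        by (cases y) auto
      define x where "x = (y' + lpt m l' r' h0) / 2"
      have "y' < lpt m l' r' h0" using y y' by simp
      hence "l' \<le> x" "x < lpt m l' r' h0" "y' < x" using y' unfolding x_def by auto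
      from lpt_key[OF assms(1-3) assms(5) assms(7) assms(8) \<open>l' \<le> x\<close> \<open>x < lpt m l' r' h0\<close>]
      show ?thesis by eventually_elim (use y' \<open>y' < x\<close> in auto)
    qed
  qed
  show "limsup (\<lambda>i. ereal (rpt m l' r' (h i))) \<le> ereal (rpt m l' r' h0)"
  proof (subst Limsup_le_iff, intro allI impI)
    fix y :: ereal assume y: "y > ereal (rpt m l' r' h0)"
    show "\<forall>\<^sub>F i in sequentially. ereal (rpt m l' r' (h i)) < y"
    proof (cases "y > ereal r'")
      case True
      then show ?thesis using rpt_bounds(2)[OF assms(2)]
        by (intro always_eventually allI) (meson ereal_less_eq(3) le_less_trans)
    next
      case False
      then obtain y' where y': "y = ereal y'" "y' \<le> r'" using y
        by (cases y) auto
      define x where "x = (y' + rpt m l' r' h0) / 2"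
      have "rpt m l' r' h0 < y'" using y y' by simp
      hence "x \<le> r'" "rpt m l' r' h0 < x" "x < y'" using y' unfolding x_def by auto
      from rpt_key[OF assms(1-3) assms(5) assms(7) assms(8) \<open>x \<le> r'\<close> \<open>rpt m l' r' h0 < x\<close>]
      show ?thesis by eventually_elim (use y' \<open>x < y'\<close> in auto)
    qed
  qed
qed

end
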